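(* Let $A$ be a physical system of dimension $m$ whose Hamiltonian has a non-degenerate Bohr spectrum, with energy eigenbasis $\{|x\rangle\}$ and Gibbs state $\gamma^A$. Let $\rho,\sigma$ be states on $A$ with $r_{xy}\coloneqq\langle x|\rho|y\rangle$, $s_{xy}\coloneqq\langle x|\sigma|y\rangle$. Suppose $r_{xy}\neq0$ for all $x,y\in[m]$ and $r_{xx}=s_{xx}$ for all $x\in[m]$. Then there exists $\mathcal{E}\in\mathrm{GPC}(A\to A)$ with $\mathcal{E}(\rho)=\sigma$ if and only if $$Q^A\coloneqq I^A+\sum_{x\neq y\in[m]}\frac{s_{xy}}{r_{xy}}|x\rangle\langle y|^A\geq0.$$
   Context: The Hamiltonian $H^A=\sum_x a_x|x\rangle\langle x|$ has a non-degenerate Bohr spectrum if for all $x,y,x',y'$: $a_x-a_y=a_{x'}-a_{y'}$ holds iff ($x=x'$ and $y=y'$) or ($x=y$ and $x'=y'$). For fixed inverse temperature $\beta>0$ the Gibbs state is $\gamma^A=e^{-\beta H^A}/\mathrm{Tr}[e^{-\beta H^A}]$. $\mathrm{GPC}(A\to A)$ is the set of quantum channels $\mathcal{E}:A\to A$ with $\mathcal{E}(\gamma^A)=\gamma^A$ and $\mathcal{E}(e^{-iH^At}\rho e^{iH^At})=e^{-iH^At}\mathcal{E}(\rho)e^{iH^At}$ for all $t\in\mathbb{R}$ and states $\rho$. *)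

theory Defs
  imports Complex_Main
begin

text \<open>Matrices on a finite index set are represented as functions of two indices
  (entries outside the relevant index range are irrelevant). For a system A of
  dimension m the basis is the energy eigenbasis, indexed by {..<m}.\<close>

type_synonym 'i cmat = "'i \<Rightarrow> 'i \<Rightarrow> complex"

definition psd_on :: "'i set \<Rightarrow> 'i cmat \<Rightarrow> bool" where
  "psd_on S M \<longleftrightarrow> (\<forall>v :: 'i \<Rightarrow> complex.
      Im (\<Sum>p\<in>S. \<Sum>q\<in>S. cnj (v p) * M p q * v q) = 0 \<and>
      Re (\<Sum>p\<in>S. \<Sum>q\<in>S. cnj (v p) * M p q * v q) \<ge> 0)"

definition is_state :: "nat \<Rightarrow> nat cmat \<Rightarrow> bool" where
  "is_state m \<rho> \<longleftrightarrow> psd_on {..<m} \<rho> \<and> (\<Sum>x<m. \<rho> x x) = 1"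

definition mat_eq_on :: "nat \<Rightarrow> nat cmat \<Rightarrow> nat cmat \<Rightarrow> bool" where
  "mat_eq_on m X Y \<longleftrightarrow> (\<forall>x<m. \<forall>y<m. X x y = Y x y)"

definition well_defined_on :: "nat \<Rightarrow> (nat cmat \<Rightarrow> nat cmat) \<Rightarrow> bool" where
  "well_defined_on m E \<longleftrightarrow> (\<forall>X Y. mat_eq_on m X Y \<longrightarrow> mat_eq_on m (E X) (E Y))"

definition linear_on :: "nat \<Rightarrow> (nat cmat \<Rightarrow> nat cmat) \<Rightarrow> bool" where
  "linear_on m E \<longleftrightarrow> (\<forall>X Y (a::complex) b. mat_eq_on m
      (E (\<lambda>i j. a * X i j + b * Y i j)) (\<lambda>i j. a * E X i j + b * E Y i j))"

definition trace_preserving :: "nat \<Rightarrow> (nat cmat \<Rightarrow> nat cmat) \<Rightarrow> bool" where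
  "trace_preserving m E \<longleftrightarrow> (\<forall>X. (\<Sum>x<m. E X x x) = (\<Sum>x<m. X x x))"

text \<open>(id_k \<otimes> E) applied to a block matrix indexed by pairs (ancilla index, system index).\<close>
definition id_tensor :: "(nat cmat \<Rightarrow> nat cmat) \<Rightarrow> (nat \<times> nat) cmat \<Rightarrow> (nat \<times> nat) cmat" where
  "id_tensor E M = (\<lambda>(i, x) (j, y). E (\<lambda>x' y'. M (i, x') (j, y')) x y)"

definition completely_positive :: "nat \<Rightarrow> (nat cmat \<Rightarrow> nat cmat) \<Rightarrow> bool" where
  "completely_positive m E \<longleftrightarrow> (\<forall>k M. psd_on ({..<k} \<times> {..<m}) M \<longrightarrow>
      psd_on ({..<k} \<times> {..<m}) (id_tensor E M))"

definition quantum_channel :: "nat \<Rightarrow> (nat cmat \<Rightarrow> nat cmat) \<Rightarrow> bool" where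
  "quantum_channel m E \<longleftrightarrow> well_defined_on m E \<and> linear_on m E \<and>
      completely_positive m E \<and> trace_preserving m E"

text \<open>Hamiltonian H = \<Sum>x a x |x><x|.\<close>

definition nondegenerate_bohr :: "nat \<Rightarrow> (nat \<Rightarrow> real) \<Rightarrow> bool" where
  "nondegenerate_bohr m a \<longleftrightarrow> (\<forall>x<m. \<forall>y<m. \<forall>x'<m. \<forall>y'<m.
      a x - a y = a x' - a y' \<longleftrightarrow> (x = x' \<and> y = y') \<or> (x = y \<and> x' = y'))"

definition gibbs :: "nat \<Rightarrow> (nat \<Rightarrow> real) \<Rightarrow> real \<Rightarrow> nat cmat" where
  "gibbs m a \<beta> = (\<lambda>x y. if x = y
      then complex_of_real (exp (- \<beta> * a x) / (\<Sum>z<m. exp (- \<beta> * a z))) else 0)"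

text \<open>e^{-iHt} X e^{iHt} in the energy eigenbasis.\<close>
definition evolve :: "(nat \<Rightarrow> real) \<Rightarrow> real \<Rightarrow> nat cmat \<Rightarrow> nat cmat" where
  "evolve a t X = (\<lambda>x y. exp (- \<i> * complex_of_real (t * a x)) * X x y *
                          exp (\<i> * complex_of_real (t * a y)))"

definition GPC :: "nat \<Rightarrow> (nat \<Rightarrow> real) \<Rightarrow> real \<Rightarrow> (nat cmat \<Rightarrow> nat cmat) \<Rightarrow> bool" where
  "GPC m a \<beta> E \<longleftrightarrow> quantum_channel m E \<and>
      mat_eq_on m (E (gibbs m a \<beta>)) (gibbs m a \<beta>) \<and>
      (\<forall>t \<rho>. is_state m \<rho> \<longrightarrow> mat_eq_on m (E (evolve a t \<rho>)) (evolve a t (E \<rho>)))"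

end

theory Submission
  imports Defs
begin

definition qform :: "'i set \<Rightarrow> 'i cmat \<Rightarrow> ('i \<Rightarrow> complex) \<Rightarrow> complex" where
  "qform S M v = (\<Sum>p\<in>S. \<Sum>q\<in>S. cnj (v p) * M p q * v q)"

lemma psd_on_iff: "psd_on S M \<longleftrightarrow> (\<forall>v. Im (qform S M v) = 0 \<and> Re (qform S M v) \<ge> 0)"
  by (simp add: psd_on_def qform_def)

lemma sum_delta2:
  fixes c :: "'i \<Rightarrow> complex"
  assumes "finite S" "x \<in> S" "p \<in> S" "x \<noteq> p"
  shows "(\<Sum>q\<in>S. c q * (if q = x then \<alpha> else if q = p then \<beta> else 0)) = c x * \<alpha> + c p * \<beta>"
proof -
  have "\<And>q. c q * (if q = x then \<alpha> else if q = p then \<beta> else 0) = (if q = x then c q * \<alpha> else 0) + (if q = p then c q * \<beta> else 0)"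
    using assms(4) by auto
  then show ?thesis using assms by (simp add: sum.distrib)
qed

lemma sum_delta2':
  fixes c :: "'i \<Rightarrow> complex"
  assumes "finite S" "x \<in> S" "p \<in> S" "x \<noteq> p"
  shows "(\<Sum>q\<in>S. (if q = x then \<alpha> else if q = p then \<beta> else 0) * c q) = \<alpha> * c x + \<beta> * c p"
  using sum_delta2[OF assms, of c \<alpha> \<beta>] by (simp add: mult.commute)

lemma qform_two:
  assumes "finite S" "x \<in> S" "p \<in> S" "x \<noteq> p"
    and v: "v = (\<lambda>q. if q = x then \<alpha> else if q = p then \<beta> else 0)"
  shows "qform S Q v =
    cnj \<alpha> * Q x x * \<alpha> + cnj \<alpha> * Q x p * \<beta> + (cnj \<beta> * Q p x * \<alpha> + cnj \<beta> * Q p p * \<beta>)"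
proof -
  have "qform S Q v = (\<Sum>r\<in>S. cnj (v r) * (\<Sum>q\<in>S. Q r q * v q))"
    unfolding qform_def by (simp add: sum_distrib_left mult.assoc)
  also have "\<dots> = (\<Sum>r\<in>S. (if r = x then cnj \<alpha> else if r = p then cnj \<beta> else 0) * (Q r x * \<alpha> + Q r p * \<beta>))"
    apply (rule sum.cong, simp)
    using sum_delta2[OF assms(1-4)] unfolding v by simp
  also have "\<dots> = cnj \<alpha> * (Q x x * \<alpha> + Q x p * \<beta>) + cnj \<beta> * (Q p x * \<alpha> + Q p p * \<beta>)"
    by (rule sum_delta2'[OF assms(1-4)])
  finally show ?thesis by (simp add: algebra_simps)
qed

lemma qform_one:
  assumes "finite S" "x \<in> S"
  shows "qform S Q (\<lambda>q. if q = x then \<alpha> else 0) = cnj \<alpha> * Q x x * \<alpha>"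
proof -
  have i: "\<And>r. (\<Sum>q\<in>S. Q r q * (if q = x then \<alpha> else 0)) = Q r x * \<alpha>"
  proof -
    fix r
    have "(\<Sum>q\<in>S. Q r q * (if q = x then \<alpha> else 0)) = (\<Sum>q\<in>S. if q = x then Q r q * \<alpha> else 0)"
      by (rule sum.cong) auto
    also have "\<dots> = Q r x * \<alpha>" using assms by simp
    finally show "?thesis r" .
  qed
  have "qform S Q (\<lambda>q. if q = x then \<alpha> else 0) = (\<Sum>r\<in>S. cnj (if r = x then \<alpha> else 0) * (\<Sum>q\<in>S. Q r q * (if q = x then \<alpha> else 0)))"
    unfolding qform_def by (simp add: sum_distrib_left mult.assoc)
  also have "\<dots> = (\<Sum>r\<in>S. if r = x then cnj \<alpha> * (Q r x * \<alpha>) else 0)"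
    unfolding i by (rule sum.cong) auto
  also have "\<dots> = cnj \<alpha> * (Q x x * \<alpha>)" using assms by simp
  finally show ?thesis by (simp add: mult.assoc)
qed

lemma psd_diag:
  assumes "psd_on S Q" "finite S" "x \<in> S"
  shows "Im (Q x x) = 0 \<and> Re (Q x x) \<ge> 0"
  using assms(1) qform_one[OF assms(2,3), of Q 1] unfolding psd_on_iff by (metis complex_cnj_one mult_1 mult_1_right)

lemma psd_herm:
  assumes "psd_on S Q" "finite S" "x \<in> S" "p \<in> S"
  shows "Q p x = cnj (Q x p)"
proof (cases "x = p")
  case True then show ?thesis using psd_diag[OF assms(1,2,3)] by (simp add: complex_eq_iff)
next
  case False
  have d1: "Im (Q x x) = 0" "Im (Q p p) = 0" using psd_diag[OF assms(1,2,3)] psd_diag[OF assms(1,2,4)] by simp_all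
  define v1 where "v1 = (\<lambda>q. if q = x then (1::complex) else if q = p then 1 else 0)"
  define v2 where "v2 = (\<lambda>q. if q = x then (1::complex) else if q = p then \<i> else 0)"
  have f1: "qform S Q v1 = Q x x + Q x p + (Q p x + Q p p)"
    using qform_two[OF assms(2,3,4) False v1_def] by simp
  have f2: "qform S Q v2 = Q x x + Q x p * \<i> + (- \<i> * Q p x + Q p p)"
    using qform_two[OF assms(2,3,4) False v2_def] by (simp add: algebra_simps)
  have "Im (qform S Q v1) = 0" "Im (qform S Q v2) = 0" using assms(1) psd_on_iff by blast+
  then have e1: "Im (Q x p) + Im (Q p x) = 0" and e2: "Re (Q x p) - Re (Q p x) = 0"
    unfolding f1 f2 using d1 by simp_all
  show ?thesis using e1 e2 by (simp add: complex_eq_iff)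
qed

lemma real_quad_zero:
  fixes q r :: real
  assumes "\<forall>s. 0 \<le> s^2 * q + 2*s*r" "q \<ge> 0"
  shows "r = 0"
proof -
  define s where "s = - r / (q + 1)"
  have hs: "(q+1)*s = -r" using assms(2) by (simp add: s_def)
  have "(q+1)^2 * (s^2 * q + 2*s*r) = ((q+1)*s)^2 * q + 2*(q+1)*((q+1)*s)*r"
    by (simp add: algebra_simps power2_eq_square)
  also have "\<dots> = - (r * r * (q+2))" unfolding hs by (simp add: algebra_simps power2_eq_square)
  finally have "(q+1)^2 * (s^2 * q + 2*s*r) = - (r * r * (q+2))" .
  moreover have "(q+1)^2 * (s^2 * q + 2*s*r) \<ge> 0" using assms(1) by simp
  ultimately have "r * r * (q+2) \<le> 0" by linarith
  moreover have "q + 2 > 0" using assms(2) by simp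
  ultimately have "r * r \<le> 0" by (simp add: mult_le_0_iff)
  then show ?thesis by (metis mult_eq_0_iff not_square_less_zero order_antisym_conv zero_le_square)
qed

lemma psd_zero:
  assumes "psd_on S Q" "finite S" "x \<in> S" "p \<in> S" "Q p p = 0"
  shows "Q x p = 0"
proof (cases "x = p")
  case True then show ?thesis using assms by simp
next
  case False
  define c where "c = Q x p"
  have h: "Q p x = cnj c" using psd_herm[OF assms(1,2,3,4)] c_def by simp
  have dx: "Im (Q x x) = 0" "Re (Q x x) \<ge> 0" using psd_diag[OF assms(1,2,3)] by simp_all
  have "\<forall>s. 0 \<le> s^2 * Re (Q x x) + 2*s*Re c"
  proof
    fix s :: real
    define v where "v = (\<lambda>q. if q = x then complex_of_real s else if q = p then 1 else 0)"
    have "qform S Q v = of_real s * Q x x * of_real s + of_real s * c + cnj c * of_real s"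
      using qform_two[OF assms(2,3,4) False v_def, of Q] h assms(5) c_def by simp
    moreover have "Re (qform S Q v) \<ge> 0" using assms(1) psd_on_iff by blast
    ultimately show "0 \<le> s^2 * Re (Q x x) + 2*s*Re c" by (simp add: power2_eq_square algebra_simps)
  qed
  then have r: "Re c = 0" using real_quad_zero dx(2) by blast
  have "\<forall>s. 0 \<le> s^2 * Re (Q x x) + 2*s*Im c"
  proof
    fix s :: real
    define v where "v = (\<lambda>q. if q = x then \<i> * complex_of_real s else if q = p then 1 else 0)"
    have "qform S Q v = (- \<i> * of_real s) * Q x x * (\<i> * of_real s) + (- \<i> * of_real s) * c + cnj c * (\<i> * of_real s)"
      using qform_two[OF assms(2,3,4) False v_def, of Q] h assms(5) c_def by simp
    also have "\<dots> = of_real (s*s) * Q x x + of_real s * (\<i> * cnj c - \<i> * c)"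
      by (simp add: algebra_simps)
    finally have e: "Re (qform S Q v) = s*s*Re (Q x x) + 2*s*Im c" by simp
    moreover have "Re (qform S Q v) \<ge> 0" using assms(1) psd_on_iff by blast
    ultimately show "0 \<le> s^2 * Re (Q x x) + 2*s*Im c" using e by (simp add: power2_eq_square)
  qed
  then have i: "Im c = 0" using real_quad_zero dx(2) by blast
  show ?thesis using r i c_def by (simp add: complex_eq_iff)
qed

lemma qform_Suc:
  assumes "\<forall>p<n. w p = v p"
  shows "qform {..<Suc n} Q w = qform {..<n} Q v + cnj (w n) * (\<Sum>q<n. Q n q * v q)
     + (\<Sum>p<n. cnj (v p) * Q p n) * w n + cnj (w n) * Q n n * w n"
proof -
  have "qform {..<Suc n} Q w = (\<Sum>p<n. \<Sum>q<n. cnj (w p) * Q p q * w q) + (\<Sum>p<n. cnj (w p) * Q p n * w n)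
     + ((\<Sum>q<n. cnj (w n) * Q n q * w q) + cnj (w n) * Q n n * w n)"
    by (simp add: qform_def sum.distrib)
  also have "(\<Sum>p<n. \<Sum>q<n. cnj (w p) * Q p q * w q) = qform {..<n} Q v"
    unfolding qform_def using assms by (intro sum.cong refl) auto
  also have "(\<Sum>p<n. cnj (w p) * Q p n * w n) = (\<Sum>p<n. cnj (v p) * Q p n) * w n"
    unfolding sum_distrib_right using assms by (intro sum.cong refl) auto
  also have "(\<Sum>q<n. cnj (w n) * Q n q * w q) = cnj (w n) * (\<Sum>q<n. Q n q * v q)"
    unfolding sum_distrib_left using assms by (intro sum.cong refl) (auto simp: mult.assoc)
  finally show ?thesis by (simp add: algebra_simps)
qed

lemma psd_restrict_Suc:
  assumes "psd_on {..<Suc n} Q"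
  shows "psd_on {..<n} Q"
  unfolding psd_on_iff
proof
  fix v :: "nat \<Rightarrow> complex"
  define w where "w = (\<lambda>p. if p < n then v p else 0)"
  have "qform {..<Suc n} Q w = qform {..<n} Q v"
    using qform_Suc[of n w v Q] by (simp add: w_def)
  then show "Im (qform {..<n} Q v) = 0 \<and> 0 \<le> Re (qform {..<n} Q v)"
    using assms unfolding psd_on_iff by metis
qed

lemma psd_schur_compl:
  assumes "psd_on {..<Suc n} Q" "Q n n \<noteq> 0"
  shows "psd_on {..<n} (\<lambda>x y. Q x y - Q x n * Q n y / Q n n)"
  unfolding psd_on_iff
proof
  fix v :: "nat \<Rightarrow> complex"
  define d where "d = Q n n"
  have dr: "cnj d = d" using psd_diag[OF assms(1), of n] by (simp add: d_def complex_eq_iff)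
  define b where "b = (\<Sum>q<n. Q n q * v q)"
  have hh: "Q p n = cnj (Q n p)" if "p < n" for p
    using psd_herm[OF assms(1), of n p] that by simp
  have cb: "(\<Sum>p<n. cnj (v p) * Q p n) = cnj b"
    unfolding b_def cnj_sum
    using hh by (intro sum.cong refl) (simp add: mult.commute)
  define w where "w = (\<lambda>p. if p < n then v p else - b / d)"
  have A: "qform {..<n} (\<lambda>x y. Q x y - Q x n * Q n y / Q n n) v
     = qform {..<n} Q v - (\<Sum>p<n. cnj (v p) * Q p n) * (\<Sum>q<n. Q n q * v q) / d"
  proof -
    have "qform {..<n} (\<lambda>x y. Q x y - Q x n * Q n y / Q n n) v
       = (\<Sum>p<n. \<Sum>q<n. cnj (v p) * Q p q * v q - (cnj (v p) * Q p n) * (Q n q * v q) / d)"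
      unfolding qform_def d_def by (intro sum.cong refl) (simp add: algebra_simps)
    also have "\<dots> = qform {..<n} Q v - (\<Sum>p<n. \<Sum>q<n. (cnj (v p) * Q p n) * (Q n q * v q)) / d"
      unfolding qform_def by (simp add: sum_subtractf sum_divide_distrib)
    also have "(\<Sum>p<n. \<Sum>q<n. (cnj (v p) * Q p n) * (Q n q * v q)) = (\<Sum>p<n. cnj (v p) * Q p n) * (\<Sum>q<n. Q n q * v q)"
      by (simp add: sum_product)
    finally show ?thesis .
  qed
  have B: "qform {..<Suc n} Q w = qform {..<n} Q v + cnj (w n) * b + cnj b * w n + cnj (w n) * d * w n"
    using qform_Suc[of n w v Q] cb by (simp add: w_def b_def d_def)
  have "qform {..<Suc n} Q w = qform {..<n} (\<lambda>x y. Q x y - Q x n * Q n y / Q n n) v"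
    unfolding A B cb b_def[symmetric] using assms(2) dr by (simp add: w_def d_def[symmetric] field_simps)
  then show "Im (qform {..<n} (\<lambda>x y. Q x y - Q x n * Q n y / Q n n) v) = 0 \<and> 0 \<le> Re (qform {..<n} (\<lambda>x y. Q x y - Q x n * Q n y / Q n n) v)"
    using assms(1) unfolding psd_on_iff by metis
qed

lemma gram:
  "psd_on {..<(n::nat)} Q \<Longrightarrow> \<exists>(L::nat) g. \<forall>x<n. \<forall>y<n. Q x y = (\<Sum>l<L. g l x * cnj (g l y))"
proof (induction n arbitrary: Q)
  case 0
  then show ?case by simp
next
  case (Suc n)
  have fin: "finite {..<Suc n}" by simp
  have nin: "n \<in> {..<Suc n}" by simp
  have dd: "Im (Q n n) = 0" "Re (Q n n) \<ge> 0" using psd_diag[OF Suc.prems fin nin] by simp_all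
  have hh: "Q y n = cnj (Q n y)" if "y < Suc n" for y
    using psd_herm[OF Suc.prems fin nin, of y] that by simp
  show ?case
  proof (cases "Q n n = 0")
    case True
    have z1: "Q x n = 0" if "x < Suc n" for x using psd_zero[OF Suc.prems fin _ nin True, of x] that by simp
    have z2: "Q n y = 0" if "y < Suc n" for y using z1[OF that] hh[OF that] by simp
    have ex: "\<exists>(L::nat) g. \<forall>x<n. \<forall>y<n. Q x y = (\<Sum>l<L. g l x * cnj (g l y))"
      by (rule Suc.IH[OF psd_restrict_Suc[OF Suc.prems]])
    then obtain L :: nat and g where g: "\<forall>x<n. \<forall>y<n. Q x y = (\<Sum>l<L. g l x * cnj (g l y))"
      by (elim exE)
    define g' where "g' = (\<lambda>l x. if x < n then g l x else 0)"
    have "\<forall>x<Suc n. \<forall>y<Suc n. Q x y = (\<Sum>l<L. g' l x * cnj (g' l y))"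
    proof (intro allI impI)
      fix x y assume xy: "x < Suc n" "y < Suc n"
      show "Q x y = (\<Sum>l<L. g' l x * cnj (g' l y))"
      proof (cases "x < n \<and> y < n")
        case True then show ?thesis using g by (simp add: g'_def)
      next
        case False
        then have "x = n \<or> y = n" using xy by auto
        then show ?thesis using z1 z2 xy by (auto simp: g'_def)
      qed
    qed
    then show ?thesis by blast
  next
    case False
    define Q' where "Q' = (\<lambda>x y. Q x y - Q x n * Q n y / Q n n)"
    have ex: "\<exists>(L::nat) g. \<forall>x<n. \<forall>y<n. Q' x y = (\<Sum>l<L. g l x * cnj (g l y))"
      unfolding Q'_def by (rule Suc.IH[OF psd_schur_compl[OF Suc.prems False]])
    then obtain L :: nat and g where g: "\<forall>x<n. \<forall>y<n. Q' x y = (\<Sum>l<L. g l x * cnj (g l y))"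
      by (elim exE)
    define sq where "sq = complex_of_real (sqrt (Re (Q n n)))"
    have sq: "sq * cnj sq = Q n n" "sq \<noteq> 0"
      using dd False by (auto simp: sq_def complex_eq_iff simp flip: of_real_mult)
    define g' where "g' = (\<lambda>l x. if l < L then (if x < n then g l x else 0) else Q x n / sq)"
    have "\<forall>x<Suc n. \<forall>y<Suc n. Q x y = (\<Sum>l<Suc L. g' l x * cnj (g' l y))"
    proof (intro allI impI)
      fix x y assume xy: "x < Suc n" "y < Suc n"
      have s1: "(\<Sum>l<Suc L. g' l x * cnj (g' l y)) = (\<Sum>l<L. g' l x * cnj (g' l y)) + Q x n * cnj (Q y n) / Q n n"
        using sq by (simp add: g'_def)
      show "Q x y = (\<Sum>l<Suc L. g' l x * cnj (g' l y))"
      proof (cases "x < n \<and> y < n")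
        case True
        then have "(\<Sum>l<L. g' l x * cnj (g' l y)) = Q' x y" using g by (simp add: g'_def)
        then show ?thesis unfolding s1 using hh[OF xy(2)] False by (simp add: Q'_def)
      next
        case c: False
        then have "(\<Sum>l<L. g' l x * cnj (g' l y)) = 0" by (auto simp: g'_def)
        moreover have "Q x n * cnj (Q y n) / Q n n = Q x y"
        proof (cases "x = n")
          case True
          then show ?thesis using hh[OF xy(2)] False by simp
        next
          case f: False
          then have "y = n" using c xy by auto
          then show ?thesis using hh[OF xy(2)] hh[OF xy(1)] False
            by (metis complex_cnj_cnj nonzero_mult_div_cancel_right)
        qed
        ultimately show ?thesis unfolding s1 by simp
      qed
    qed
    then show ?thesis by blast
  qed
qed

lemma rank1_psd:
  assumes "c \<ge> 0"
  shows "psd_on S (\<lambda>p q. complex_of_real c * (f p * cnj (f q)))"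
  unfolding psd_on_iff
proof
  fix v
  define z where "z = (\<Sum>p\<in>S. cnj (v p) * f p)"
  define z' where "z' = (\<Sum>q\<in>S. cnj (f q) * v q)"
  have cz: "cnj z = z'" unfolding z_def z'_def cnj_sum by (simp add: mult.commute)
  have "qform S (\<lambda>p q. complex_of_real c * (f p * cnj (f q))) v = (\<Sum>p\<in>S. (of_real c * (cnj (v p) * f p)) * z')"
    unfolding qform_def z'_def sum_distrib_left
    by (intro sum.cong refl) (simp add: algebra_simps)
  also have "\<dots> = of_real c * (z * z')"
    unfolding z_def sum_distrib_left sum_distrib_right by (simp add: algebra_simps)
  also have "\<dots> = of_real c * (z * cnj z)" by (simp add: cz)
  also have "\<dots> = of_real (c * (norm z)^2)" by (simp only: of_real_mult complex_norm_square)
  finally show "Im (qform S (\<lambda>p q. complex_of_real c * (f p * cnj (f q))) v) = 0 \<and>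
      0 \<le> Re (qform S (\<lambda>p q. complex_of_real c * (f p * cnj (f q))) v)"
    using assms by simp
qed

lemma schur_cp:
  fixes m k :: nat
  assumes "psd_on {..<m} Q" "psd_on ({..<k} \<times> {..<m}) M"
  shows "psd_on ({..<k} \<times> {..<m}) (\<lambda>p q. Q (snd p) (snd q) * M p q)"
proof -
  obtain L :: nat and g where g: "\<forall>x<m. \<forall>y<m. Q x y = (\<Sum>l<L. g l x * cnj (g l y))"
    using gram[OF assms(1)] by (elim exE)
  let ?S = "{..<k} \<times> {..<m}"
  show ?thesis unfolding psd_on_iff
  proof
    fix w :: "nat \<times> nat \<Rightarrow> complex"
    have "qform ?S (\<lambda>p q. Q (snd p) (snd q) * M p q) w
      = (\<Sum>p\<in>?S. \<Sum>q\<in>?S. \<Sum>l<L. cnj (w p * cnj (g l (snd p))) * M p q * (w q * cnj (g l (snd q))))"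
      unfolding qform_def
      by (intro sum.cong refl) (auto simp: g sum_distrib_left sum_distrib_right algebra_simps)
    also have "\<dots> = (\<Sum>p\<in>?S. \<Sum>l<L. \<Sum>q\<in>?S. cnj (w p * cnj (g l (snd p))) * M p q * (w q * cnj (g l (snd q))))"
      by (intro sum.cong refl sum.swap)
    also have "\<dots> = (\<Sum>l<L. qform ?S M (\<lambda>p. w p * cnj (g l (snd p))))"
      unfolding qform_def by (rule sum.swap)
    finally have e: "qform ?S (\<lambda>p q. Q (snd p) (snd q) * M p q) w = (\<Sum>l<L. qform ?S M (\<lambda>p. w p * cnj (g l (snd p))))" .
    have "\<And>l. Im (qform ?S M (\<lambda>p. w p * cnj (g l (snd p)))) = 0 \<and> Re (qform ?S M (\<lambda>p. w p * cnj (g l (snd p)))) \<ge> 0"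
      using assms(2) unfolding psd_on_iff by blast
    then show "Im (qform ?S (\<lambda>p q. Q (snd p) (snd q) * M p q) w) = 0 \<and> 0 \<le> Re (qform ?S (\<lambda>p q. Q (snd p) (snd q) * M p q) w)"
      unfolding e by (simp add: Im_sum Re_sum sum_nonneg)
  qed
qed

lemma lin_sum:
  assumes "linear_on m E" "finite I"
  shows "mat_eq_on m (E (\<lambda>i j. \<Sum>k\<in>I. c k * X k i j)) (\<lambda>i j. \<Sum>k\<in>I. c k * E (X k) i j)"
proof -
  have lin: "\<And>X Y a b. mat_eq_on m (E (\<lambda>i j. a * X i j + b * Y i j)) (\<lambda>i j. a * E X i j + b * E Y i j)"
    using assms(1) unfolding linear_on_def by blast
  show ?thesis
  using assms(2)
  proof (induction I rule: finite_induct)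
    case empty
    have "mat_eq_on m (E (\<lambda>i j. 0 * X0 i j + 0 * X0 i j)) (\<lambda>i j. 0 * E X0 i j + 0 * E X0 i j)" for X0
      by (rule lin)
    then show ?case by simp
  next
    case (insert k I)
    have eq: "(\<lambda>i j. \<Sum>k\<in>insert k I. c k * X k i j) = (\<lambda>i j. c k * X k i j + 1 * (\<Sum>k\<in>I. c k * X k i j))"
      using insert by simp
    have "mat_eq_on m (E (\<lambda>i j. c k * X k i j + 1 * (\<Sum>k\<in>I. c k * X k i j)))
        (\<lambda>i j. c k * E (X k) i j + 1 * E (\<lambda>i j. \<Sum>k\<in>I. c k * X k i j) i j)"
      by (rule lin)
    then show ?case using insert unfolding eq mat_eq_on_def by simp
  qed
qed

lemma sum_diag_pairs:
  fixes h :: "nat \<Rightarrow> complex"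
  assumes "finite A"
  shows "(\<Sum>p\<in>A \<times> A. if fst p = snd p then h (fst p) else 0) = (\<Sum>i\<in>A. h i)"
proof -
  have "(\<Sum>p\<in>A \<times> A. if fst p = snd p then h (fst p) else 0) = (\<Sum>i\<in>A. \<Sum>x\<in>A. if i = x then h i else 0)"
    by (simp add: sum.cartesian_product case_prod_beta)
  also have "\<dots> = (\<Sum>i\<in>A. h i)" using assms by simp
  finally show ?thesis .
qed

lemma diag_embed:
  fixes A :: "nat set"
  assumes "finite A"
  shows "qform (A \<times> A) T (\<lambda>p. if fst p = snd p then v (fst p) else 0) = qform A (\<lambda>i j. T (i,i) (j,j)) v"
proof -
  let ?w = "\<lambda>p::nat\<times>nat. if fst p = snd p then v (fst p) else 0"
  have inner: "(\<Sum>q\<in>A \<times> A. cnj (?w p) * T p q * ?w q) = (\<Sum>j\<in>A. cnj (?w p) * T p (j,j) * v j)" for p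
  proof -
    have "(\<Sum>q\<in>A \<times> A. cnj (?w p) * T p q * ?w q) = (\<Sum>q\<in>A \<times> A. if fst q = snd q then cnj (?w p) * T p (fst q, fst q) * v (fst q) else 0)"
      by (intro sum.cong refl) (auto simp: prod_eq_iff)
    also have "\<dots> = (\<Sum>j\<in>A. cnj (?w p) * T p (j,j) * v j)"
      by (rule sum_diag_pairs[OF assms, of "\<lambda>j. cnj (?w p) * T p (j,j) * v j"])
    finally show ?thesis .
  qed
  have "qform (A \<times> A) T ?w = (\<Sum>p\<in>A \<times> A. \<Sum>j\<in>A. cnj (?w p) * T p (j,j) * v j)"
    unfolding qform_def inner ..
  also have "\<dots> = (\<Sum>p\<in>A \<times> A. if fst p = snd p then (\<Sum>j\<in>A. cnj (v (fst p)) * T (fst p, fst p) (j,j) * v j) else 0)"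
    by (intro sum.cong refl) (auto simp: prod_eq_iff)
  also have "\<dots> = qform A (\<lambda>i j. T (i,i) (j,j)) v"
    unfolding qform_def by (rule sum_diag_pairs[OF assms, of "\<lambda>i. (\<Sum>j\<in>A. cnj (v i) * T (i, i) (j,j) * v j)"])
  finally show ?thesis .
qed

lemma qform_add:
  "qform S (\<lambda>i j. A i j + B i j) v = qform S A v + qform S B v"
  unfolding qform_def by (simp add: algebra_simps sum.distrib)

lemma qform_diagm:
  assumes "finite S"
  shows "qform S (\<lambda>i j. if i = j then D i else 0) v = (\<Sum>i\<in>S. D i * of_real ((norm (v i))^2))"
  unfolding qform_def complex_norm_square
proof (intro sum.cong refl)
  fix i assume "i \<in> S"
  have "(\<Sum>q\<in>S. cnj (v i) * (if i = q then D i else 0) * v q) = (\<Sum>q\<in>S. if q = i then cnj (v i) * D i * v i else 0)"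
    by (intro sum.cong refl) auto
  then show "(\<Sum>q\<in>S. cnj (v i) * (if i = q then D i else 0) * v q) = D i * (v i * cnj (v i))"
    using assms \<open>i \<in> S\<close> by (simp add: algebra_simps)
qed

lemma if_dir:
  fixes \<rho> \<sigma> :: "nat cmat"
  assumes r0: "\<forall>x<m. \<forall>y<m. \<rho> x y \<noteq> 0" and rd: "\<forall>x<m. \<rho> x x = \<sigma> x x"
    and Qpsd: "psd_on {..<m} (\<lambda>x y. if x = y then 1 else \<sigma> x y / \<rho> x y)"
  shows "\<exists>E. GPC m a \<beta> E \<and> mat_eq_on m (E \<rho>) \<sigma>"
proof -
  define Q where "Q = (\<lambda>x y. if x = y then 1 else \<sigma> x y / \<rho> x y)"
  define E where "E = (\<lambda>(X::nat cmat) x y. Q x y * X x y)"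
  have wd: "well_defined_on m E" unfolding well_defined_on_def mat_eq_on_def E_def by simp
  have lin: "linear_on m E" unfolding linear_on_def mat_eq_on_def E_def by (simp add: algebra_simps)
  have tp: "trace_preserving m E" unfolding trace_preserving_def E_def Q_def by simp
  have cp: "completely_positive m E" unfolding completely_positive_def
  proof (intro allI impI)
    fix k :: nat and M :: "(nat \<times> nat) cmat" assume M: "psd_on ({..<k} \<times> {..<m}) M"
    have "id_tensor E M = (\<lambda>p q. Q (snd p) (snd q) * M p q)"
      unfolding id_tensor_def E_def by (intro ext) (auto split: prod.split)
    then show "psd_on ({..<k} \<times> {..<m}) (id_tensor E M)"
      using schur_cp[OF Qpsd[folded Q_def] M] by simp
  qed
  have gib: "mat_eq_on m (E (gibbs m a \<beta>)) (gibbs m a \<beta>)"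
    unfolding mat_eq_on_def E_def gibbs_def Q_def by simp
  have cov: "E (evolve a t X) = evolve a t (E X)" for t X
    unfolding E_def evolve_def by (intro ext) (simp add: algebra_simps)
  have "GPC m a \<beta> E" unfolding GPC_def quantum_channel_def
    using wd lin tp cp gib cov by (simp add: mat_eq_on_def)
  moreover have "mat_eq_on m (E \<rho>) \<sigma>"
    unfolding mat_eq_on_def E_def Q_def using r0 rd by auto
  ultimately show ?thesis by blast
qed

definition bm :: "nat \<Rightarrow> nat \<Rightarrow> nat cmat" where
  "bm i j = (\<lambda>x y. if x = i \<and> y = j then 1 else 0)"

definition covX :: "nat \<Rightarrow> (nat \<Rightarrow> real) \<Rightarrow> (nat cmat \<Rightarrow> nat cmat) \<Rightarrow> nat cmat \<Rightarrow> bool" where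
  "covX m a E X \<longleftrightarrow> (\<forall>t. mat_eq_on m (E (evolve a t X)) (evolve a t (E X)))"

lemma cov_lin:
  assumes "linear_on m E" "covX m a E X" "covX m a E Y"
  shows "covX m a E (\<lambda>i j. c * X i j + d * Y i j)"
  unfolding covX_def
proof
  fix t
  have lin: "\<And>X Y a b. mat_eq_on m (E (\<lambda>i j. a * X i j + b * Y i j)) (\<lambda>i j. a * E X i j + b * E Y i j)"
    using assms(1) unfolding linear_on_def by blast
  have ev: "evolve a t (\<lambda>i j. c * X i j + d * Y i j) = (\<lambda>i j. c * evolve a t X i j + d * evolve a t Y i j)"
    unfolding evolve_def by (intro ext) (simp add: algebra_simps)
  have 1: "mat_eq_on m (E (\<lambda>i j. c * evolve a t X i j + d * evolve a t Y i j)) (\<lambda>i j. c * E (evolve a t X) i j + d * E (evolve a t Y) i j)"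
    by (rule lin)
  have 2: "mat_eq_on m (E (\<lambda>i j. c * X i j + d * Y i j)) (\<lambda>i j. c * E X i j + d * E Y i j)"
    by (rule lin)
  show "mat_eq_on m (E (evolve a t (\<lambda>i j. c * X i j + d * Y i j))) (evolve a t (E (\<lambda>i j. c * X i j + d * Y i j)))"
    using 1 2 assms(2,3) unfolding ev covX_def mat_eq_on_def evolve_def by (simp add: algebra_simps)
qed

lemma state_rank1:
  assumes "c \<ge> 0" "of_real c * (\<Sum>p<m. f p * cnj (f p)) = 1"
  shows "is_state m (\<lambda>p q. complex_of_real c * (f p * cnj (f q)))"
  unfolding is_state_def using rank1_psd[OF assms(1)] assms(2) by (simp add: sum_distrib_left)

lemma bm_cov:
  assumes G: "GPC m a \<beta> E" and xy: "x < m" "y < m"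
  shows "covX m a E (bm x y)"
proof -
  have lin: "linear_on m E" using G unfolding GPC_def quantum_channel_def by blast
  have sc: "covX m a E X" if "is_state m X" for X
    using G that unfolding GPC_def covX_def by blast
  have diag: "covX m a E (bm z z)" if "z < m" for z
  proof -
    define f where "f = (\<lambda>p. if p = z then (1::complex) else 0)"
    have "bm z z = (\<lambda>p q. complex_of_real 1 * (f p * cnj (f q)))"
      unfolding bm_def f_def by (intro ext) simp
    moreover have "of_real 1 * (\<Sum>p<m. f p * cnj (f p)) = 1"
      using that by (simp add: f_def if_distrib[of "\<lambda>u. u * _"] cong: if_cong)
    ultimately show ?thesis using sc state_rank1[where c=1 and f=f and m=m] by simp
  qed
  show ?thesis
  proof (cases "x = y")
    case True then show ?thesis using diag xy by simp
  next
    case False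
    define h1 where "h1 = (\<lambda>p. if p = x then (1::complex) else if p = y then 1 else 0)"
    define h2 where "h2 = (\<lambda>p. if p = x then (1::complex) else if p = y then \<i> else 0)"
    have fin: "finite {..<m}" "x \<in> {..<m}" "y \<in> {..<m}" using xy by auto
    have n1: "h1 p * cnj (h1 p) = 1 * (if p = x then 1 else if p = y then 1 else 0)" for p
      by (simp add: h1_def)
    have n2: "h2 p * cnj (h2 p) = 1 * (if p = x then 1 else if p = y then 1 else 0)" for p
      by (simp add: h2_def)
    have s1: "of_real (1/2) * (\<Sum>p<m. h1 p * cnj (h1 p)) = 1"
      unfolding n1 sum_delta2[OF fin False] by simp
    have s2: "of_real (1/2) * (\<Sum>p<m. h2 p * cnj (h2 p)) = 1"
      unfolding n2 sum_delta2[OF fin False] by simp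
    define P1 where "P1 = (\<lambda>p q. complex_of_real (1/2) * (h1 p * cnj (h1 q)))"
    define P2 where "P2 = (\<lambda>p q. complex_of_real (1/2) * (h2 p * cnj (h2 q)))"
    have c1: "covX m a E P1" unfolding P1_def by (rule sc[OF state_rank1[OF _ s1]]) simp
    have c2: "covX m a E P2" unfolding P2_def by (rule sc[OF state_rank1[OF _ s2]]) simp
    have c12: "covX m a E (\<lambda>i j. 1 * P1 i j + \<i> * P2 i j)" by (rule cov_lin[OF lin c1 c2])
    have cd: "covX m a E (\<lambda>i j. 1 * bm x x i j + 1 * bm y y i j)" by (rule cov_lin[OF lin diag diag]; fact)
    have eq: "bm x y = (\<lambda>i j. 1 * (\<lambda>i j. 1 * P1 i j + \<i> * P2 i j) i j + (-(1+\<i>)/2) * (\<lambda>i j. 1 * bm x x i j + 1 * bm y y i j) i j)"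
      using False unfolding bm_def P1_def P2_def h1_def h2_def
      by (intro ext) (auto simp: field_simps)
    show ?thesis unfolding eq by (rule cov_lin[OF lin c12 cd])
  qed
qed

lemma vanish:
  assumes lin: "linear_on m E" and cv: "covX m a E (bm x' y')" and xy: "x < m" "y < m"
    and ne: "a x' - a y' \<noteq> a x - a y"
  shows "E (bm x' y') x y = 0"
proof -
  define u where "u = (a y' - a x') - (a y - a x)"
  have u0: "u \<noteq> 0" using ne by (simp add: u_def)
  define t where "t = pi / u"
  define B where "B = bm x' y'"
  define c where "c = exp (- \<i> * complex_of_real (t * a x')) * exp (\<i> * complex_of_real (t * a y'))"
  have ev: "evolve a t B = (\<lambda>i j. c * B i j + 0 * B i j)"
    unfolding evolve_def B_def bm_def c_def by (intro ext) auto
  have l: "mat_eq_on m (E (\<lambda>i j. c * B i j + 0 * B i j)) (\<lambda>i j. c * E B i j + 0 * E B i j)"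
    using lin unfolding linear_on_def by blast
  have "mat_eq_on m (E (evolve a t B)) (evolve a t (E B))" using cv unfolding covX_def B_def by blast
  then have "mat_eq_on m (E (\<lambda>i j. c * B i j + 0 * B i j)) (evolve a t (E B))" unfolding ev .
  then have e0: "c * E B x y = exp (- \<i> * complex_of_real (t * a x)) * E B x y * exp (\<i> * complex_of_real (t * a y))"
    using l xy unfolding mat_eq_on_def evolve_def by auto
  have ex: "exp (- \<i> * complex_of_real r) = cis (- r)" for r
    by (simp add: cis_conv_exp)
  have ex2: "exp (\<i> * complex_of_real r) = cis r" for r
    by (simp add: cis_conv_exp)
  have e0': "cis (-(t*a x')) * cis (t * a y') * E B x y = cis (-(t*a x)) * E B x y * cis (t*a y)"
    using e0 unfolding c_def ex ex2 .
  have m1: "cis (-(t*a x')) * cis (t * a y') = cis (t * (a y' - a x'))"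
    unfolding cis_mult by (simp add: algebra_simps)
  have m3: "cis (-(t*a x)) * cis (t*a y) = cis (t * (a y - a x))"
    unfolding cis_mult by (simp add: algebra_simps)
  have m2: "cis (-(t*a x)) * E B x y * cis (t*a y) = cis (t * (a y - a x)) * E B x y"
    unfolding m3[symmetric] by (simp only: mult_ac)
  have e1: "cis (t * (a y' - a x')) * E B x y = cis (t * (a y - a x)) * E B x y"
    using e0' unfolding m1 m2 .
  have "cis (t * (a y' - a x')) = cis (t * (a y - a x)) * cis (t * u)"
    by (simp add: cis_mult u_def algebra_simps)
  also have "t * u = pi" using u0 by (simp add: t_def)
  finally have "cis (t * (a y' - a x')) = - cis (t * (a y - a x))" by simp
  then have "2 * cis (t * (a y - a x)) * E B x y = 0" using e1 by (simp add: algebra_simps)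
  then show ?thesis unfolding B_def by simp
qed

lemma qform_cong:
  assumes "\<forall>p\<in>S. \<forall>q\<in>S. A p q = B p q"
  shows "qform S A v = qform S B v"
  unfolding qform_def using assms by (intro sum.cong refl) auto

lemma only_if_dir:
  fixes \<rho> \<sigma> :: "nat cmat"
  assumes nd: "nondegenerate_bohr m a" and r0: "\<forall>x<m. \<forall>y<m. \<rho> x y \<noteq> 0"
    and G: "GPC m a \<beta> E" and Er: "mat_eq_on m (E \<rho>) \<sigma>"
  shows "psd_on {..<m} (\<lambda>x y. if x = y then 1 else \<sigma> x y / \<rho> x y)"
proof -
  have wd: "well_defined_on m E" and lin: "linear_on m E" and cp: "completely_positive m E"
    and tp: "trace_preserving m E"
    using G unfolding GPC_def quantum_channel_def by blast+
  define C where "C = (\<lambda>i j. E (bm i j) i j)"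
  let ?K = "{..<m} \<times> {..<m}"
  have finK: "finite ?K" by simp
  have dec: "mat_eq_on m \<rho> (\<lambda>i j. \<Sum>k\<in>?K. \<rho> (fst k) (snd k) * bm (fst k) (snd k) i j)"
    unfolding mat_eq_on_def
  proof (intro allI impI)
    fix i j assume ij: "i < m" "j < m"
    have "(\<Sum>k\<in>?K. \<rho> (fst k) (snd k) * bm (fst k) (snd k) i j) = (\<Sum>k\<in>?K. if k = (i,j) then \<rho> i j else 0)"
      unfolding bm_def by (intro sum.cong refl) auto
    also have "\<dots> = \<rho> i j" using ij by simp
    finally show "\<rho> i j = (\<Sum>k\<in>?K. \<rho> (fst k) (snd k) * bm (fst k) (snd k) i j)" by simp
  qed
  have e1: "mat_eq_on m (E \<rho>) (E (\<lambda>i j. \<Sum>k\<in>?K. \<rho> (fst k) (snd k) * bm (fst k) (snd k) i j))"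
    using wd dec unfolding well_defined_on_def by (elim allE impE)
  have e2: "mat_eq_on m (E (\<lambda>i j. \<Sum>k\<in>?K. \<rho> (fst k) (snd k) * bm (fst k) (snd k) i j))
      (\<lambda>i j. \<Sum>k\<in>?K. \<rho> (fst k) (snd k) * E (bm (fst k) (snd k)) i j)"
    by (rule lin_sum[OF lin finK])
  have off: "\<sigma> x y / \<rho> x y = C x y" if xy: "x < m" "y < m" "x \<noteq> y" for x y
  proof -
    have a1: "E \<rho> x y = \<sigma> x y" using Er xy unfolding mat_eq_on_def by blast
    have a2: "E \<rho> x y = E (\<lambda>i j. \<Sum>k\<in>?K. \<rho> (fst k) (snd k) * bm (fst k) (snd k) i j) x y"
      using e1 xy unfolding mat_eq_on_def by blast
    have a3: "E (\<lambda>i j. \<Sum>k\<in>?K. \<rho> (fst k) (snd k) * bm (fst k) (snd k) i j) x y = (\<Sum>k\<in>?K. \<rho> (fst k) (snd k) * E (bm (fst k) (snd k)) x y)"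
      using e2 xy unfolding mat_eq_on_def by blast
    have "\<sigma> x y = (\<Sum>k\<in>?K. \<rho> (fst k) (snd k) * E (bm (fst k) (snd k)) x y)"
      using a1 a2 a3 by simp
    also have "\<dots> = (\<Sum>k\<in>?K. if k = (x,y) then \<rho> x y * C x y else 0)"
    proof (intro sum.cong refl)
      fix k assume k: "k \<in> ?K"
      show "\<rho> (fst k) (snd k) * E (bm (fst k) (snd k)) x y = (if k = (x,y) then \<rho> x y * C x y else 0)"
      proof (cases "k = (x,y)")
        case True then show ?thesis by (simp add: C_def)
      next
        case False
        have kk: "fst k < m" "snd k < m" using k by auto
        have "a (fst k) - a (snd k) = a x - a y \<longleftrightarrow> (fst k = x \<and> snd k = y) \<or> (fst k = snd k \<and> x = y)"
          using nd[unfolded nondegenerate_bohr_def, rule_format, OF kk xy(1,2)] .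
        moreover have "\<not> (fst k = x \<and> snd k = y)" using False by (auto simp: prod_eq_iff)
        ultimately have "a (fst k) - a (snd k) \<noteq> a x - a y" using xy(3) by blast
        then have "E (bm (fst k) (snd k)) x y = 0"
          using vanish[OF lin bm_cov[OF G kk] xy(1,2)] by blast
        then show ?thesis using False by simp
      qed
    qed
    also have "\<dots> = \<rho> x y * C x y" using xy by simp
    finally show ?thesis using r0 xy by simp
  qed
  have dg: "Im (C i i) = 0 \<and> Re (C i i) \<le> 1" if i: "i < m" for i
  proof -
    define f where "f = (\<lambda>p::nat\<times>nat. if snd p = i then (1::complex) else 0)"
    define M where "M = (\<lambda>p q. complex_of_real 1 * (f p * cnj (f q)))"
    have "psd_on ({..<1} \<times> {..<m}) M" unfolding M_def by (rule rank1_psd) simp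
    then have T: "psd_on ({..<1} \<times> {..<m}) (id_tensor E M)" using cp unfolding completely_positive_def by blast
    have Mb: "(\<lambda>x' y'. M (0, x') (0, y')) = bm i i" unfolding M_def f_def bm_def by (intro ext) simp
    have pos: "Im (E (bm i i) x x) = 0 \<and> Re (E (bm i i) x x) \<ge> 0" if "x < m" for x
    proof -
      have "Im (id_tensor E M (0,x) (0,x)) = 0 \<and> Re (id_tensor E M (0,x) (0,x)) \<ge> 0"
        by (rule psd_diag[OF T]) (use that in auto)
      moreover have "id_tensor E M (0,x) (0,x) = E (\<lambda>x' y'. M (0, x') (0, y')) x x"
        by (simp add: id_tensor_def)
      ultimately show ?thesis unfolding Mb by simp
    qed
    have tr: "(\<Sum>x<m. E (bm i i) x x) = 1"
      using tp i unfolding trace_preserving_def by (simp add: bm_def)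
    have "Re (C i i) \<le> (\<Sum>x<m. Re (E (bm i i) x x))"
      unfolding C_def by (rule member_le_sum) (use pos i in auto)
    also have "\<dots> = 1" using tr by (metis Re_sum one_complex.sel)
    finally show ?thesis using pos[OF i] unfolding C_def by simp
  qed
  have choi: "psd_on {..<m} C"
  proof -
    define f where "f = (\<lambda>p::nat\<times>nat. if fst p = snd p then (1::complex) else 0)"
    define M where "M = (\<lambda>p q. complex_of_real 1 * (f p * cnj (f q)))"
    have "psd_on ?K M" unfolding M_def by (rule rank1_psd) simp
    then have T: "psd_on ?K (id_tensor E M)" using cp unfolding completely_positive_def by blast
    have Mb: "(\<lambda>x' y'. M (i, x') (j, y')) = bm i j" for i j unfolding M_def f_def bm_def by (intro ext) auto
    have TC0: "id_tensor E M (i,i) (j,j) = E (\<lambda>x' y'. M (i, x') (j, y')) i j" for i j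
      by (simp add: id_tensor_def)
    have TC: "(\<lambda>i j. id_tensor E M (i,i) (j,j)) = C"
      unfolding TC0 Mb C_def ..
    show ?thesis unfolding psd_on_iff
    proof
      fix v :: "nat \<Rightarrow> complex"
      have "qform ?K (id_tensor E M) (\<lambda>p. if fst p = snd p then v (fst p) else 0) = qform {..<m} C v"
        using diag_embed[of "{..<m}" "id_tensor E M" v] unfolding TC by simp
      then show "Im (qform {..<m} C v) = 0 \<and> 0 \<le> Re (qform {..<m} C v)"
        using T unfolding psd_on_iff by metis
    qed
  qed
  show ?thesis unfolding psd_on_iff
  proof
    fix v :: "nat \<Rightarrow> complex"
    have "qform {..<m} (\<lambda>x y. if x = y then 1 else \<sigma> x y / \<rho> x y) v
        = qform {..<m} (\<lambda>i j. C i j + (if i = j then 1 - C i i else 0)) v"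
      by (rule qform_cong) (auto simp: off)
    also have "\<dots> = qform {..<m} C v + (\<Sum>i<m. (1 - C i i) * of_real ((norm (v i))^2))"
      unfolding qform_add by (subst qform_diagm) simp_all
    finally have eq: "qform {..<m} (\<lambda>x y. if x = y then 1 else \<sigma> x y / \<rho> x y) v = qform {..<m} C v + (\<Sum>i<m. (1 - C i i) * of_real ((norm (v i))^2))" .
    have c: "Im (qform {..<m} C v) = 0" "Re (qform {..<m} C v) \<ge> 0" using choi unfolding psd_on_iff by blast+
    have "Im (\<Sum>i<m. (1 - C i i) * of_real ((norm (v i))^2)) = 0"
      unfolding Im_sum using dg by (intro sum.neutral) simp
    moreover have "Re (\<Sum>i<m. (1 - C i i) * of_real ((norm (v i))^2)) \<ge> 0"
      unfolding Re_sum using dg by (intro sum_nonneg) simp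
    ultimately show "Im (qform {..<m} (\<lambda>x y. if x = y then 1 else \<sigma> x y / \<rho> x y) v) = 0 \<and>
        0 \<le> Re (qform {..<m} (\<lambda>x y. if x = y then 1 else \<sigma> x y / \<rho> x y) v)"
      unfolding eq using c by simp
  qed
qed

theorem theorem4:
  fixes m :: nat and a :: "nat \<Rightarrow> real" and \<beta> :: real and \<rho> \<sigma> :: "nat cmat"
  assumes "\<beta> > 0"
    and "nondegenerate_bohr m a"
    and "is_state m \<rho>" and "is_state m \<sigma>"
    and "\<forall>x<m. \<forall>y<m. \<rho> x y \<noteq> 0"
    and "\<forall>x<m. \<rho> x x = \<sigma> x x"
  shows "(\<exists>E. GPC m a \<beta> E \<and> mat_eq_on m (E \<rho>) \<sigma>) \<longleftrightarrow>
         psd_on {..<m} (\<lambda>x y. if x = y then 1 else \<sigma> x y / \<rho> x y)"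
  using only_if_dir[OF assms(2,5)] if_dir[where m=m and \<rho>=\<rho> and \<sigma>=\<sigma> and a=a and \<beta>=\<beta>, OF assms(5,6)] by blast

end
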